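(* Let $(X,d)$ be a metric space admitting a weak conical bicombing, and let $T:X\rightarrow X$ be an isometric embedding (i.e. $d(Tx,Ty)=d(x,y)$ for all $x,y\in X$). Put $d_T=\inf_{x\in X}d(x,Tx)$. Then there is a metric functional $h\in\overline{X}$ such that \[ h(Tx)=h(x)-d_T\quad\text{for all }x\in X. \] If $h=h_{y}$ for some point $y\in X$, then $Ty=y$. If $T$ is an isometry (a surjective isometric embedding), then $Th=h$.
   Context: Let $(X,d)$ be a metric space and fix a base point $x_0\in X$. Let $\mathrm{Hom}(X,\mathbb{R})$ be the set of $1$-Lipschitz functions $X\to\mathbb{R}$ with the topology of pointwise convergence. For $x\in X$ set $h_x(\cdot)=d(\cdot,x)-d(x_0,x)$. The metric compactification $\overline{X}$ is the closure of $\{h_x:x\in X\}$ in $\mathrm{Hom}(X,\mathbb{R})$ (it is compact); its elements are called metric functionals. A surjective isometry $T$ of $X$ acts on $\overline{X}$ by $(Th)(x)=h(T^{-1}x)-h(T^{-1}x_0)$. A weak conical bicombing on $X$ is a map $\sigma:X\times X\times[0,1]\to X$, $(x,y,t)\mapsto\sigma_{xy}(t)$, such that for all $x,y$ the path $\sigma_{xy}$ is a constant speed geodesic from $x$ to $y$ (i.e. $\sigma_{xy}(0)=x$, $\sigma_{xy}(1)=y$, $d(\sigma_{xy}(s),\sigma_{xy}(t))=|s-t|\,d(x,y)$), and $d(\sigma_{xy}(t),\sigma_{xy'}(t))\le t\,d(y,y')$ for all $x,y,y'\in X$ and $t\in[0,1]$. *)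

theory Defs
  imports "HOL-Analysis.Analysis"
begin

text \<open>The functions of type 'a => real carry the product topology
(pointwise convergence), instantiated in HOL-Analysis Function_Topology.\<close>

definition one_lipschitz :: "('a::metric_space \<Rightarrow> real) \<Rightarrow> bool" where
  "one_lipschitz f \<longleftrightarrow> (\<forall>x y. \<bar>f x - f y\<bar> \<le> dist x y)"

definition hfun :: "'a::metric_space \<Rightarrow> 'a \<Rightarrow> ('a \<Rightarrow> real)" where
  "hfun x0 x = (\<lambda>z. dist z x - dist x0 x)"

definition metric_compactification :: "'a::metric_space \<Rightarrow> ('a \<Rightarrow> real) set" where
  "metric_compactification x0 = closure (range (hfun x0)) \<inter> {f. one_lipschitz f}"

definition weak_conical_bicombing :: "('a::metric_space \<Rightarrow> 'a \<Rightarrow> real \<Rightarrow> 'a) \<Rightarrow> bool" where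
  "weak_conical_bicombing \<sigma> \<longleftrightarrow>
     (\<forall>x y. \<sigma> x y 0 = x \<and> \<sigma> x y 1 = y \<and>
        (\<forall>s\<in>{0..1}. \<forall>t\<in>{0..1}. dist (\<sigma> x y s) (\<sigma> x y t) = \<bar>s - t\<bar> * dist x y)) \<and>
     (\<forall>x y y'. \<forall>t\<in>{0..1}. dist (\<sigma> x y t) (\<sigma> x y' t) \<le> t * dist y y')"

definition isom_act :: "'a \<Rightarrow> ('a \<Rightarrow> 'a) \<Rightarrow> ('a \<Rightarrow> real) \<Rightarrow> ('a \<Rightarrow> real)" where
  "isom_act x0 T h = (\<lambda>x. h (inv T x) - h (inv T x0))"

end

theory Submission
  imports Defs
begin

lemma approx:
  fixes T :: "'a::metric_space \<Rightarrow> 'a" and \<sigma> :: "'a \<Rightarrow> 'a \<Rightarrow> real \<Rightarrow> 'a" and x0 :: 'a and n :: nat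
  assumes wcb: "weak_conical_bicombing \<sigma>" and iso: "\<forall>x y. dist (T x) (T y) = dist x y" and n: "n > 0"
  shows "\<exists>y. \<forall>x. \<bar>dist (T x) y - dist x y + (INF z. dist z (T z))\<bar>
            \<le> (5 + (INF z. dist z (T z)) + dist x0 x + dist x0 (T x)) / real n"
proof -
  define dT where "dT = (INF z. dist z (T z))"
  define \<delta> where "\<delta> = 1 / real n"
  have dpos: "\<delta> > 0" "\<delta> \<le> 1" using n by (auto simp: \<delta>_def)
  have bdd: "bdd_below (range (\<lambda>z. dist z (T z)))" by (auto intro: bdd_belowI[where m=0])
  have dTle: "\<And>z. dT \<le> dist z (T z)" unfolding dT_def by (rule cINF_lower[OF bdd]) simp
  have dT0: "dT \<ge> 0" unfolding dT_def by (rule cINF_greatest) auto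
  obtain z where z: "dist z (T z) < dT + \<delta>"
    using cINF_less_iff[OF _ bdd, of "dT + \<delta>"] dpos unfolding dT_def by auto
  define b where "b = dist x0 (T z)"
  have b0: "b \<ge> 0" by (simp add: b_def)
  define c where "c = 1 / (real n * (1 + b))"
  have c0: "c > 0" using n b0 by (simp add: c_def)
  have c1: "c \<le> \<delta>" unfolding c_def \<delta>_def using n b0
    by (intro divide_left_mono) (auto simp: mult_le_cancel_left1)
  have cbe: "c * b = (b / (1 + b)) * \<delta>" using b0 by (simp add: c_def \<delta>_def)
  have "b / (1 + b) \<le> 1" using b0 by simp
  then have cb: "c * b \<le> \<delta>" unfolding cbe using dpos mult_right_mono[of "b / (1 + b)" 1 \<delta>] by simp
  define r where "r = 1 - c"
  have r01: "r \<in> {0..1}" "r < 1" using c0 c1 dpos by (auto simp: r_def)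
  have s0: "\<And>p q. \<sigma> p q 0 = p" and s1: "\<And>p q. \<sigma> p q 1 = q"
    and sd: "\<And>p q s t. s\<in>{0..1} \<Longrightarrow> t\<in>{0..1} \<Longrightarrow> dist (\<sigma> p q s) (\<sigma> p q t) = \<bar>s-t\<bar> * dist p q"
    and sc: "\<And>p q q' t. t\<in>{0..1} \<Longrightarrow> dist (\<sigma> p q t) (\<sigma> p q' t) \<le> t * dist q q'"
    using wcb unfolding weak_conical_bicombing_def by auto
  have sA: "dist x0 (\<sigma> x0 p r) = r * dist x0 p" for p
    using sd[of 0 r x0 p] r01 s0[of x0 p] by simp
  have sB: "dist (\<sigma> x0 p r) p = c * dist x0 p" for p
    using sd[of r 1 x0 p] r01 s1[of x0 p] by (simp add: r_def)
  define F where "F = (\<lambda>y. \<sigma> x0 (T y) r)"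
  have Fc: "dist (F a) (F a') \<le> r * dist a a'" for a a'
    using sc[of r x0 "T a" "T a'"] r01 iso by (simp add: F_def)
  define m where "m = (INF y. dist y (F y))"
  have bddm: "bdd_below (range (\<lambda>y. dist y (F y)))" by (auto intro: bdd_belowI[where m=0])
  have m0: "m \<ge> 0" unfolding m_def by (rule cINF_greatest) auto
  have mle: "m \<le> r * dist y (F y)" for y
  proof -
    have "m \<le> dist (F y) (F (F y))" unfolding m_def by (rule cINF_lower[OF bddm]) simp
    also have "\<dots> \<le> r * dist y (F y)" by (rule Fc)
    finally show ?thesis .
  qed
  have "m \<le> 0"
  proof (cases "r = 0")
    case True then show ?thesis using mle[of x0] by simp
  next
    case False
    then have rp: "r > 0" using r01 by auto
    have "m / r \<le> dist y (F y)" for y using mle[of y] rp by (simp add: pos_divide_le_eq mult.commute)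
    then have "m / r \<le> m" unfolding m_def[symmetric] by - (unfold m_def, rule cINF_greatest, auto simp: m_def)
    then have "m \<le> r * m" using rp by (simp add: divide_le_eq mult.commute)
    moreover have "m > 0 \<Longrightarrow> r * m < m" using r01 by simp
    ultimately show ?thesis by linarith
  qed
  then have "m < \<delta>" using dpos by linarith
  then obtain y where y: "dist y (F y) < \<delta>"
    using cINF_less_iff[OF _ bddm, of \<delta>] unfolding m_def by auto
  define w where "w = F y"
  define D where "D = dist x0 (T y)"
  have wA: "dist x0 w = r * D" and wB: "dist w (T y) = c * D"
    using sA sB by (simp_all add: w_def F_def D_def)
  have yw: "dist y w < \<delta>" using y by (simp add: w_def)
  define a where "a = dist y z"
  have "dist w z \<le> dist w (\<sigma> x0 (T z) r) + dist (\<sigma> x0 (T z) r) z" by (rule dist_triangle)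
  moreover have "dist w (\<sigma> x0 (T z) r) \<le> r * a"
    using sc[of r x0 "T y" "T z"] r01 iso by (simp add: w_def F_def a_def)
  moreover have "dist (\<sigma> x0 (T z) r) z \<le> c * b + dist z (T z)"
    using dist_triangle[of "\<sigma> x0 (T z) r" z "T z"] sB[of "T z"] by (simp add: b_def dist_commute)
  moreover have "a \<le> dist y w + dist w z" unfolding a_def by (rule dist_triangle)
  moreover have "r * a = a - c * a" by (simp add: r_def algebra_simps)
  ultimately have ca: "c * a \<le> \<delta> + c * b + dist z (T z)" using yw by linarith
  have "D \<le> b + a" unfolding D_def b_def a_def
    using dist_triangle[of x0 "T y" "T z"] iso by (simp add: dist_commute)
  then have "c * D \<le> c * b + c * a" using c0 by (simp add: distrib_left[symmetric])
  then have cD: "c * D \<le> dT + 4 * \<delta>" using ca cb z by linarith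
  have dy: "dist y (T y) \<le> \<delta> + c * D"
    using dist_triangle[of y "T y" w] yw wB by (simp add: dist_commute)
  have dTcD: "dT - \<delta> \<le> c * D" using dTle[of y] dy by linarith
  show ?thesis
  proof (intro exI allI)
    fix x
    have low: "dist (T x) y \<ge> dist x y - dT - 5 * \<delta>"
      using dist_triangle[of "T x" "T y" y] iso dy cD by (simp add: dist_commute) 
    have u1: "dist (T x) y \<le> \<delta> + c * dist x0 (T x) + r * dist x y"
    proof -
      have "dist (T x) y \<le> dist (T x) w + dist w y" by (rule dist_triangle)
      moreover have "dist (T x) w \<le> dist (T x) (\<sigma> x0 (T x) r) + dist (\<sigma> x0 (T x) r) w" by (rule dist_triangle)
      moreover have "dist (\<sigma> x0 (T x) r) (T x) = c * dist x0 (T x)" by (rule sB)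
      moreover have "dist (\<sigma> x0 (T x) r) w \<le> r * dist x y"
        using sc[of r x0 "T x" "T y"] r01 iso by (simp add: w_def F_def)
      ultimately show ?thesis using yw by (simp add: dist_commute)
    qed
    have "dist x y \<ge> r * D - \<delta> - dist x0 x"
      using dist_triangle[of x0 y x] dist_triangle[of x0 w y] wA yw by (simp add: dist_commute)
    then have "c * dist x y \<ge> c * (r * D - \<delta> - dist x0 x)" using c0 by (simp add: mult_left_mono)
    moreover have "r * (c * D) \<ge> r * (dT - \<delta>)" using dTcD r01 by (simp add: mult_left_mono)
    moreover have "c * (r * D - \<delta> - dist x0 x) = r * (c * D) - c * \<delta> - c * dist x0 x" by (simp add: algebra_simps)
    moreover have "r * (dT - \<delta>) = dT - c * dT - r * \<delta>" by (simp add: r_def algebra_simps)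
    moreover have "r * \<delta> + c * \<delta> = \<delta>" by (simp add: r_def algebra_simps)
    moreover have "r * dist x y = dist x y - c * dist x y" by (simp add: r_def algebra_simps)
    ultimately have up: "dist (T x) y - dist x y \<le> - dT + 2 * \<delta> + c * (dT + dist x0 x + dist x0 (T x))"
      using u1 by (simp add: algebra_simps)
    have "c * (dT + dist x0 x + dist x0 (T x)) \<le> \<delta> * (dT + dist x0 x + dist x0 (T x))"
      using c1 dT0 by (intro mult_right_mono) auto
    then have up2: "dist (T x) y - dist x y + dT \<le> 5 * \<delta> + \<delta> * (dT + dist x0 x + dist x0 (T x))"
      using up dpos by linarith
    have "\<bar>dist (T x) y - dist x y + dT\<bar> \<le> 5 * \<delta> + \<delta> * (dT + dist x0 x + dist x0 (T x))"
      using up2 low dpos dT0 by (simp add: abs_le_iff) (smt (verit) zero_le_dist mult_nonneg_nonneg)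
    also have "\<dots> = (5 + dT + dist x0 x + dist x0 (T x)) / real n" by (simp add: \<delta>_def add_divide_distrib)
    finally show "\<bar>dist (T x) y - dist x y + (INF z. dist z (T z))\<bar> \<le> (5 + (INF z. dist z (T z)) + dist x0 x + dist x0 (T x)) / real n"
      by (simp add: dT_def)
  qed
qed

lemma cluster_meets:
  assumes "inf (nhds h) F \<noteq> bot" "open U" "h \<in> U" "eventually P F"
  shows "\<exists>f\<in>U. P f"
proof (rule ccontr)
  assume "\<not> (\<exists>f\<in>U. P f)"
  then have "eventually (\<lambda>_. False) (inf (nhds h) F)"
    using assms(2-4) unfolding eventually_inf
    by (intro exI[of _ "\<lambda>f. f \<in> U"] exI[of _ P]) (auto simp: eventually_nhds)
  then show False using assms(1) by (simp add: eventually_False)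
qed

theorem theorem1:
  fixes T :: "'a::metric_space \<Rightarrow> 'a" and x0 :: 'a
  assumes "\<exists>\<sigma>::'a \<Rightarrow> 'a \<Rightarrow> real \<Rightarrow> 'a. weak_conical_bicombing \<sigma>"
    and "\<forall>x y. dist (T x) (T y) = dist x y"
  shows "\<exists>h\<in>metric_compactification x0.
           (\<forall>x. h (T x) = h x - (INF z. dist z (T z))) \<and>
           (\<forall>y. h = hfun x0 y \<longrightarrow> T y = y) \<and>
           (surj T \<longrightarrow> isom_act x0 T h = h)"
proof -
  obtain \<sigma> :: "'a \<Rightarrow> 'a \<Rightarrow> real \<Rightarrow> 'a" where wcb: "weak_conical_bicombing \<sigma>" using assms(1) by blast
  note iso = assms(2)
  define dT where "dT = (INF z. dist z (T z))"
  have dT0: "dT \<ge> 0" unfolding dT_def by (rule cINF_greatest) auto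
  have "\<forall>n. \<exists>y. \<forall>x. \<bar>dist (T x) y - dist x y + dT\<bar> \<le> (5 + dT + dist x0 x + dist x0 (T x)) / real (Suc n)"
    using approx[OF wcb iso, of "Suc _" x0] unfolding dT_def by blast
  then obtain y where y: "\<And>n x. \<bar>dist (T x) (y n) - dist x (y n) + dT\<bar> \<le> (5 + dT + dist x0 x + dist x0 (T x)) / real (Suc n)"
    by metis
  define S where "S = range (hfun x0)"
  define C :: "('a \<Rightarrow> real) set" where "C = PiE UNIV (\<lambda>x. {- dist x x0 .. dist x x0})"
  have "compactin (product_topology (\<lambda>_. euclidean) UNIV) C"
    unfolding C_def by (simp add: compactin_PiE)
  then have cC: "compact C" by (metis euclidean_product_topology compactin_euclidean_iff)
  have hC: "hfun x0 p \<in> C" for p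
  proof -
    have "\<bar>dist x p - dist x0 p\<bar> \<le> dist x x0" for x
      using dist_triangle[of x p x0] dist_triangle[of x0 p x] by (simp add: dist_commute abs_le_iff)
    then show ?thesis unfolding C_def hfun_def PiE_iff by (auto simp: abs_le_iff) (smt (verit))
  qed
  define F where "F = filtermap (\<lambda>n. hfun x0 (y n)) sequentially"
  have Fnb: "F \<noteq> bot" by (simp add: F_def filtermap_bot_iff)
  have FC: "eventually (\<lambda>f. f \<in> C) F" using hC by (simp add: F_def eventually_filtermap)
  obtain h where hC: "h \<in> C" and clu: "inf (nhds h) F \<noteq> bot"
    using cC Fnb FC unfolding compact_filter by blast
  have hS: "h \<in> closure S"
  proof (rule ccontr)
    assume "h \<notin> closure S"
    moreover have "eventually (\<lambda>f. f \<in> S) F" by (simp add: F_def eventually_filtermap S_def)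
    ultimately obtain f where "f \<in> - closure S" "f \<in> S"
      using cluster_meets[OF clu, of "- closure S"] by blast
    then show False using closure_subset by blast
  qed
  have clS: "closed {f::'a\<Rightarrow>real. (\<forall>x. \<forall>z. \<bar>f x - f z\<bar> \<le> dist x z) \<and> f x0 = 0}"
    by (intro closed_Collect_conj closed_Collect_all closed_Collect_le closed_Collect_eq
        continuous_intros continuous_on_product_coordinates)
  have "S \<subseteq> {f::'a\<Rightarrow>real. (\<forall>x. \<forall>z. \<bar>f x - f z\<bar> \<le> dist x z) \<and> f x0 = 0}"
  proof -
    have "\<bar>dist x p - dist z p\<bar> \<le> dist x z" for x z p
      using dist_triangle[of x p z] dist_triangle[of z p x] by (simp add: dist_commute abs_le_iff)
    then show ?thesis by (auto simp: S_def hfun_def)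
  qed
  then have "closure S \<subseteq> {f::'a\<Rightarrow>real. (\<forall>x. \<forall>z. \<bar>f x - f z\<bar> \<le> dist x z) \<and> f x0 = 0}"
    using clS by (rule closure_minimal)
  then have hL: "one_lipschitz h" and h0: "h x0 = 0" using hS by (auto simp: one_lipschitz_def)
  have hT: "h (T x) = h x - dT" for x
  proof (rule ccontr)
    assume "h (T x) \<noteq> h x - dT"
    define A where "A = h (T x) - h x + dT"
    define \<eta> where "\<eta> = \<bar>A\<bar>"
    have \<eta>: "\<eta> > 0" using \<open>h (T x) \<noteq> h x - dT\<close> by (simp add: \<eta>_def A_def)
    define U where "U = {f::'a\<Rightarrow>real. \<bar>(f (T x) - f x + dT) - A\<bar> < \<eta> / 2}"
    have oU: "open U" unfolding U_def
      by (intro open_Collect_less continuous_intros continuous_on_product_coordinates)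
    have hU: "h \<in> U" using \<eta> by (simp add: U_def A_def)
    define K where "K = 5 + dT + dist x0 x + dist x0 (T x)"
    have K: "K > 0" using dT0 by (simp add: K_def add_pos_nonneg)
    obtain N :: nat where N: "2 * K / \<eta> < real N" using reals_Archimedean2 by blast
    have "eventually (\<lambda>f. \<bar>f (T x) - f x + dT\<bar> < \<eta> / 2) F"
      unfolding F_def eventually_filtermap eventually_sequentially
    proof (intro exI allI impI)
      fix n assume "N \<le> n"
      then have "2 * K / \<eta> < real (Suc n)" using N by linarith
      then have "2 * K < \<eta> * real (Suc n)" using \<eta> by (simp add: divide_less_eq mult.commute)
      then have "K / real (Suc n) < \<eta> / 2" by (simp add: divide_less_eq field_simps)
      moreover have "\<bar>hfun x0 (y n) (T x) - hfun x0 (y n) x + dT\<bar> \<le> K / real (Suc n)"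
        using y[of x n] by (simp add: hfun_def K_def)
      ultimately show "\<bar>hfun x0 (y n) (T x) - hfun x0 (y n) x + dT\<bar> < \<eta> / 2" by linarith
    qed
    then obtain f where "f \<in> U" "\<bar>f (T x) - f x + dT\<bar> < \<eta> / 2"
      using cluster_meets[OF clu oU hU] by blast
    then show False unfolding U_def \<eta>_def by simp (smt (verit))
  qed
  show ?thesis
  proof (intro bexI conjI allI impI)
    show "h \<in> metric_compactification x0"
      using hS hL by (simp add: metric_compactification_def S_def)
    fix x show "h (T x) = h x - (INF z. dist z (T z))" using hT by (simp add: dT_def)
  next
    fix p assume "h = hfun x0 p"
    then have "dist (T p) p - dist x0 p = dist p p - dist x0 p - dT"
      using hT[of p] by (simp add: hfun_def)
    then have "dist (T p) p \<le> 0" using dT0 by simp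
    then show "T p = p" by simp
  next
    assume "surj T"
    have e: "h (inv T z) = h z + dT" for z
      using hT[of "inv T z"] surj_f_inv_f[OF \<open>surj T\<close>, of z] by simp
    show "isom_act x0 T h = h"
      by (rule ext) (simp add: isom_act_def e h0)
  qed
qed

end
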